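(* Let $c>1$ be an irrational number, let $d=\{c\}^{-1}$, let $c'_n=[c^{-1}n]$, and define $$f(n)=[c^{-1}(n+1)]-[c^{-1}n],\qquad g(n)=[\{c\}(n+1)]-[\{c\}n].$$ Let $k$ be a nonnegative integer, and for a positive integer $m$ let $x=[mc]$. Then, as $m\to\infty$, \begin{align*} \sum_{n=1}^x \frac{f(n)g([\frac{n}{c}]+k+1)}{n} =\;& \frac{\{c\}}{c}+(cd)^{-1}(\log m + \log c + \gamma)+\{d^{-1}(1+k)\}\\ &- \sum_{n=1}^\infty \frac{d^{-1}\{c^{-1}(n+1)\}+\{d^{-1}(c'_{n+1}+k+1)\}}{n(n+1)} + O\left(\frac{1}{m}\right), \end{align*} where $\gamma$ is Euler's constant.
   Context: $[x]$ is the greatest integer not exceeding $x$ and $\{x\}=x-[x]$. The function $f$ is the indicator of $\{[cj]:j\ge1\}$ and $g$ is the indicator of $\{[dj]:j\ge1\}$. The implied constant may depend on $c$ and $k$. *)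

theory Defs
  imports "HOL-Analysis.Analysis" "HOL-Library.Landau_Symbols"
begin

definition ff :: "real \<Rightarrow> int \<Rightarrow> real" where
  "ff c n = of_int (\<lfloor>(of_int n + 1) / c\<rfloor> - \<lfloor>of_int n / c\<rfloor>)"

definition gg :: "real \<Rightarrow> int \<Rightarrow> real" where
  "gg c n = of_int (\<lfloor>frac c * (of_int n + 1)\<rfloor> - \<lfloor>frac c * of_int n\<rfloor>)"

definition cprime :: "real \<Rightarrow> int \<Rightarrow> int" where
  "cprime c n = \<lfloor>of_int n / c\<rfloor>"

end

theory Submission
  imports Defs "HOL-Real_Asymp.Real_Asymp"
begin

definition Ef :: "real \<Rightarrow> nat \<Rightarrow> nat \<Rightarrow> real" where
  "Ef c k m = frac c * frac (real m / c) + frac (frac c * (of_int \<lfloor>real m / c\<rfloor> + real k + 1))"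

definition Pf :: "real \<Rightarrow> nat \<Rightarrow> nat \<Rightarrow> real" where
  "Pf c k m = of_int \<lfloor>frac c * (of_int \<lfloor>real m / c\<rfloor> + real k + 1)\<rfloor>"

lemma floor_step:
  assumes "c > (1::real)"
  shows "\<lfloor>(real n + 1)/c\<rfloor> = \<lfloor>real n/c\<rfloor> \<or> \<lfloor>(real n + 1)/c\<rfloor> = \<lfloor>real n/c\<rfloor> + 1"
proof -
  define y where "y = real n / c"
  define t where "t = 1 / c"
  have t: "0 < t" "t < 1" using assms by (auto simp: t_def)
  have e: "(real n + 1)/c = y + t" using assms by (simp add: y_def t_def add_divide_distrib)
  have 1: "\<lfloor>y\<rfloor> \<le> \<lfloor>y + t\<rfloor>" using t by (intro floor_mono) simp
  have "y < of_int \<lfloor>y\<rfloor> + 1" by linarith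
  hence "y + t < of_int (\<lfloor>y\<rfloor> + 2)" using t by linarith
  hence 2: "\<lfloor>y + t\<rfloor> < \<lfloor>y\<rfloor> + 2" by (simp add: floor_less_iff)
  show ?thesis using 1 2 unfolding e y_def[symmetric] by linarith
qed

lemma term_eq:
  assumes "c > (1::real)"
  shows "ff c (int n) * gg c (\<lfloor>real n / c\<rfloor> + int k + 1) = Pf c k (Suc n) - Pf c k n"
  using floor_step[OF assms, of n]
proof
  assume h: "\<lfloor>(real n + 1)/c\<rfloor> = \<lfloor>real n/c\<rfloor>"
  show ?thesis unfolding ff_def Pf_def using h by (simp add: add.commute)
next
  assume h: "\<lfloor>(real n + 1)/c\<rfloor> = \<lfloor>real n/c\<rfloor> + 1"
  show ?thesis unfolding ff_def gg_def Pf_def using h by (simp add: add.commute algebra_simps)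
qed

lemma Pf_eq:
  assumes "c > (0::real)"
  shows "Pf c k m = frac c / c * real m + frac c * (real k + 1) - Ef c k m"
  unfolding Pf_def Ef_def frac_def using assms by (simp add: field_simps)

lemma Ef_bounds:
  assumes "c > (1::real)"
  shows "0 \<le> Ef c k m" "Ef c k m \<le> 2"
proof -
  have a: "0 \<le> frac c" "frac c < 1" by (auto simp: frac_lt_1)
  have b: "0 \<le> frac (real m / c)" "frac (real m / c) < 1" by (auto simp: frac_lt_1)
  have "frac c * frac (real m / c) \<le> 1 * 1" using a b by (intro mult_mono) auto
  moreover have "0 \<le> frac c * frac (real m / c)" using a b by simp
  moreover have "frac (frac c * (of_int \<lfloor>real m / c\<rfloor> + real k + 1)) < 1" by (simp add: frac_lt_1)
  moreover have "frac (frac c * (of_int \<lfloor>real m / c\<rfloor> + real k + 1)) \<ge> 0" by simp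
  ultimately show "0 \<le> Ef c k m" "Ef c k m \<le> 2" unfolding Ef_def by linarith+
qed

lemma Ef_1:
  assumes "c > (1::real)"
  shows "Ef c k 1 = frac c / c + frac (frac c * (1 + real k))"
proof -
  have f: "\<lfloor>1 / c\<rfloor> = 0" using assms by (simp add: floor_eq_iff)
  have "frac (1/c) = 1/c" using f by (simp add: frac_def)
  thus ?thesis unfolding Ef_def using f by (simp add: algebra_simps)
qed

lemma L1: "(a::real) > 0 \<Longrightarrow> u/(a+1) + u/(a*(a+1)) = u/a"
proof -
  assume a: "a > 0"
  have "u/(a+1) = (u*a)/(a*(a+1))" using a by simp
  hence "u/(a+1) + u/(a*(a+1)) = (u*a + u)/(a*(a+1))" by (simp add: add_divide_distrib)
  also have "\<dots> = (u*(a+1))/(a*(a+1))" by (simp add: algebra_simps)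
  also have "\<dots> = u/a" using a by simp
  finally show ?thesis .
qed

lemma abel:
  fixes h :: "nat \<Rightarrow> real"
  shows "(\<Sum>n<x. (h (n+2) - h (n+1)) / (real n + 1)) =
     h (x+1) / (real x + 1) - h 1 + (\<Sum>n<x. h (n+2) / ((real n + 1) * (real n + 2)))"
proof (induction x)
  case 0 then show ?case by simp
next
  case (Suc x)
  have i: "h (x+2)/(real x + 2) - h (x+1)/(real x + 1) + h (x+2)/((real x + 1)*(real x + 2))
      = (h (x+2) - h (x+1)) / (real x + 1)"
  proof -
    define a where "a = real x + 1"
    have a0: "a > 0" by (simp add: a_def)
    have b: "real x + 2 = a + 1" by (simp add: a_def)
    have "h (x+2)/(a+1) + h (x+2)/(a*(a+1)) = h (x+2) / a"
      using a0 by (rule L1)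
    then show ?thesis unfolding b a_def[symmetric] by (simp add: diff_divide_distrib)
  qed
  have a: "(\<Sum>n<Suc x. (h (n+2) - h (n+1)) / (real n + 1)) = (\<Sum>n<x. (h (n+2) - h (n+1)) / (real n + 1)) + (h (x+2) - h (x+1)) / (real x + 1)" by simp
  have b: "(\<Sum>n<Suc x. h (n+2) / ((real n + 1) * (real n + 2))) = (\<Sum>n<x. h (n+2) / ((real n + 1) * (real n + 2))) + h (x+2)/((real x + 1)*(real x + 2))" by simp
  have c: "h (Suc x + 1) / (real (Suc x) + 1) = h (x+2)/(real x + 2)" by (simp add: add.commute)
  show ?case unfolding a b c using Suc i by linarith
qed


lemma sum_main:
  assumes c1: "c > (1::real)"
  shows "(\<Sum>n = 1..x. ff c (int n) * gg c (\<lfloor>real n / c\<rfloor> + int k + 1) / real n)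
     = frac c / c * harm x - (Ef c k (x+1) / (real x + 1) - Ef c k 1
        + (\<Sum>n<x. Ef c k (n+2) / ((real n + 1) * (real n + 2))))"
proof -
  have "(\<Sum>n = 1..x. ff c (int n) * gg c (\<lfloor>real n / c\<rfloor> + int k + 1) / real n)
     = (\<Sum>n<x. ff c (int (Suc n)) * gg c (\<lfloor>real (Suc n) / c\<rfloor> + int k + 1) / real (Suc n))"
    using sum.atLeast1_atMost_eq[of "\<lambda>n. ff c (int n) * gg c (\<lfloor>real n / c\<rfloor> + int k + 1) / real n" x]
    by simp
  also have "\<dots> = (\<Sum>n<x. frac c / c * inverse (real (Suc n)) - (Ef c k (n+2) - Ef c k (n+1)) / (real n + 1))"
  proof (rule sum.cong[OF refl])
    fix n assume "n \<in> {..<x}"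
    have "ff c (int (Suc n)) * gg c (\<lfloor>real (Suc n) / c\<rfloor> + int k + 1) = Pf c k (Suc (Suc n)) - Pf c k (Suc n)"
      by (rule term_eq[OF c1])
    also have "\<dots> = frac c / c - (Ef c k (n+2) - Ef c k (n+1))"
      using c1 by (simp add: Pf_eq field_simps)
    finally have h: "ff c (int (Suc n)) * gg c (\<lfloor>real (Suc n) / c\<rfloor> + int k + 1) = frac c / c - (Ef c k (n+2) - Ef c k (n+1))" .
    have rs: "real (Suc n) = real n + 1" by simp
    show "ff c (int (Suc n)) * gg c (\<lfloor>real (Suc n) / c\<rfloor> + int k + 1) / real (Suc n)
       = frac c / c * inverse (real (Suc n)) - (Ef c k (n+2) - Ef c k (n+1)) / (real n + 1)"
      by (subst h) (simp add: algebra_simps divide_inverse)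
  qed
  also have "\<dots> = frac c / c * harm x - (\<Sum>n<x. (Ef c k (n+2) - Ef c k (n+1)) / (real n + 1))"
    by (simp add: sum_subtractf sum_distrib_left harm_altdef)
  also have "\<dots> = frac c / c * harm x - (Ef c k (x+1) / (real x + 1) - Ef c k 1
        + (\<Sum>n<x. Ef c k (n+2) / ((real n + 1) * (real n + 2))))"
    by (subst abel) (rule refl)
  finally show ?thesis .
qed

lemma tele:
  fixes x :: nat
  shows "(\<lambda>n. 2 / ((real (n + x) + 1) * (real (n + x) + 2))) sums (2 / (real x + 1))"
proof -
  define g where "g n = 2 / (real (n + x) + 1)" for n
  have "g \<longlonglongrightarrow> 0" unfolding g_def by real_asymp
  hence "(\<lambda>n. g n - g (Suc n)) sums (g 0 - 0)" by (rule telescope_sums')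
  moreover have "g n - g (Suc n) = 2 / ((real (n + x) + 1) * (real (n + x) + 2))" for n
  proof -
    have "g (Suc n) = 2 / ((real (n + x) + 1) + 1)" by (simp add: g_def add_ac)
    moreover have "(real (n + x) + 1) > 0" by simp
    ultimately show ?thesis unfolding g_def by (simp add: field_simps)
  qed
  ultimately show ?thesis by (simp add: g_def)
qed

lemma tail:
  fixes k :: nat
  assumes c1: "c > (1::real)"
  defines "T \<equiv> \<lambda>n. Ef c k (n+2) / ((real n + 1) * (real n + 2))"
  shows "summable T" "0 \<le> suminf T - (\<Sum>n<x. T n)" "suminf T - (\<Sum>n<x. T n) \<le> 2 / (real x + 1)"
proof -
  have T0: "0 \<le> T n" for n unfolding T_def using Ef_bounds[OF c1, of k "n+2"] by simp
  have Tle: "T n \<le> 2 / ((real n + 1) * (real n + 2))" for n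
    unfolding T_def using Ef_bounds[OF c1, of k "n+2"] by (intro divide_right_mono) auto
  have s0: "summable (\<lambda>n. 2 / ((real n + 1) * (real n + 2)))"
    using tele[of 0] by (simp add: sums_summable)
  show sT: "summable T"
    by (rule summable_comparison_test[OF _ s0]) (use T0 Tle in auto)
  have eq: "suminf T - (\<Sum>n<x. T n) = (\<Sum>n. T (n + x))"
    using suminf_split_initial_segment[OF sT, of x] by simp
  have sx: "summable (\<lambda>n. T (n + x))" using sT by (rule summable_ignore_initial_segment)
  show "0 \<le> suminf T - (\<Sum>n<x. T n)" unfolding eq using sx T0 by (intro suminf_nonneg) auto
  have "(\<Sum>n. T (n + x)) \<le> 2 / (real x + 1)"
  proof (rule sums_le[OF _ summable_sums[OF sx] tele[of x]])
    fix n show "T (n + x) \<le> 2 / ((real (n + x) + 1) * (real (n + x) + 2))"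
      using Tle[of "n+x"] by simp
  qed
  then show "suminf T - (\<Sum>n<x. T n) \<le> 2 / (real x + 1)" unfolding eq .
qed

lemma harm_bound:
  assumes "N > 0"
  shows "\<bar>harm N - ln (real N) - euler_mascheroni\<bar> \<le> 1 / real N"
proof -
  obtain n where N: "N = Suc n" using assms by (cases N) auto
  have l: "euler_mascheroni \<ge> harm N - ln (real N + 1) + 1/real_of_nat (2 * (n + 2))"
    using euler_mascheroni_lower[of n] unfolding N by (simp add: add_ac)
  have u: "euler_mascheroni \<le> harm N - ln (real N + 1) + 1/real_of_nat (2 * (n + 1))"
    using euler_mascheroni_upper[of n] unfolding N by (simp add: add_ac)
  have p: "0 \<le> 1/real_of_nat (2 * (n + 2))" by simp
  have q: "1/real_of_nat (2 * (n + 1)) \<le> 1 / real N" unfolding N by (simp add: field_simps)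
  have r: "ln (real N + 1) - ln (real N) < 1 / real N"
    using ln_diff_le_inverse[of "real N"] assms by simp
  have t: "ln (real N) \<le> ln (real N + 1)" using assms by simp
  show ?thesis unfolding abs_le_iff using l u p q r t by (intro conjI) linarith+
qed


lemma main_bound:
  fixes c :: real and k :: nat and m :: nat and d :: real
  assumes c1: "c > 1" and m1: "m \<ge> 1" and d_def: "d = inverse (frac c)"
  shows "\<bar>(\<Sum>n = 1..nat \<lfloor>real m * c\<rfloor>.
          ff c (int n) * gg c (\<lfloor>real n / c\<rfloor> + int k + 1) / real n)
    - (frac c / c + inverse (c * d) * (ln (real m) + ln c + euler_mascheroni)
       + frac (inverse d * (1 + real k))
       - (\<Sum>n. (inverse d * frac ((real (Suc n) + 1) / c)
                 + frac (inverse d * (of_int (cprime c (int (Suc n) + 1)) + real k + 1)))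
               / (real (Suc n) * (real (Suc n) + 1))))\<bar> \<le> 6 / real m"
proof -
  define x where "x = nat \<lfloor>real m * c\<rfloor>"
  define T where "T = (\<lambda>n. Ef c k (n+2) / ((real n + 1) * (real n + 2)))"
  define ab where "ab = frac c / c"
  have mpos: "real m > 0" using m1 by simp
  have mc: "real m \<le> real m * c" using c1 mpos by simp
  have fl0: "\<lfloor>real m * c\<rfloor> \<ge> int m" using mc by (simp add: le_floor_iff)
  have fx: "real x = of_int \<lfloor>real m * c\<rfloor>" unfolding x_def using fl0 by simp
  have xle: "real x \<le> real m * c" unfolding fx by simp
  have xgt: "real m * c < real x + 1" unfolding fx by linarith
  have xm: "real m \<le> real x" unfolding fx using fl0 by simp
  have xpos: "real x > 0" using xm mpos by linarith
  hence x0: "x > 0" by simp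
  have ser: "(\<lambda>n. (inverse d * frac ((real (Suc n) + 1) / c)
                 + frac (inverse d * (of_int (cprime c (int (Suc n) + 1)) + real k + 1)))
               / (real (Suc n) * (real (Suc n) + 1))) = T"
    unfolding T_def d_def by (rule ext) (simp add: Ef_def cprime_def add_ac)
  have h1: "(\<Sum>n = 1..x. ff c (int n) * gg c (\<lfloor>real n / c\<rfloor> + int k + 1) / real n)
     = ab * harm x - (Ef c k (x+1) / (real x + 1) - Ef c k 1 + (\<Sum>n<x. T n))"
    unfolding ab_def T_def by (rule sum_main[OF c1])
  have h2: "Ef c k 1 = ab + frac (frac c * (1 + real k))" unfolding ab_def by (rule Ef_1[OF c1])
  have h3: "inverse (c * d) = ab" unfolding ab_def d_def by (simp add: divide_inverse mult.commute)
  have h4: "inverse d = frac c" unfolding d_def by simp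
  have h5: "ln (real m) + ln c = ln (real m * c)" using mpos c1 by (simp add: ln_mult_pos)
  define A where "A = harm x - ln (real x) - euler_mascheroni"
  define B where "B = ln (real m * c) - ln (real x)"
  define R where "R = suminf T - (\<Sum>n<x. T n)"
  have e: "(\<Sum>n = 1..x. ff c (int n) * gg c (\<lfloor>real n / c\<rfloor> + int k + 1) / real n)
    - (frac c / c + inverse (c * d) * (ln (real m) + ln c + euler_mascheroni)
       + frac (inverse d * (1 + real k))
       - (\<Sum>n. (inverse d * frac ((real (Suc n) + 1) / c)
                 + frac (inverse d * (of_int (cprime c (int (Suc n) + 1)) + real k + 1)))
               / (real (Suc n) * (real (Suc n) + 1))))
     = ab * (A - B) - Ef c k (x+1) / (real x + 1) + R"
    unfolding ser unfolding h1 h3 h4 A_def B_def R_def h2 ab_def[symmetric] h5[symmetric]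
    by (simp add: algebra_simps)
  have bA: "\<bar>A\<bar> \<le> 1 / real x" unfolding A_def by (rule harm_bound[OF x0])
  have B0: "0 \<le> B" unfolding B_def using xle xpos mpos c1 by simp
  have "ln (real m * c) \<le> ln (real x + 1)" using xgt xpos mpos c1 by simp
  moreover have "ln (real x + 1) - ln (real x) < 1 / real x"
    using ln_diff_le_inverse[of "real x"] x0 by simp
  ultimately have B1: "B \<le> 1 / real x" unfolding B_def by linarith
  have ab0: "0 \<le> ab" "ab \<le> 1" unfolding ab_def using c1 frac_lt_1[of c]
    by (auto simp: field_simps)
  have "\<bar>ab * (A - B)\<bar> \<le> 1 * (2 / real x)"
    unfolding abs_mult using ab0 bA B0 B1 by (intro mult_mono) auto
  moreover have "\<bar>Ef c k (x+1) / (real x + 1)\<bar> \<le> 2 / real x"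
  proof -
    have "\<bar>Ef c k (x+1) / (real x + 1)\<bar> = Ef c k (x+1) / (real x + 1)"
      using Ef_bounds[OF c1, of k "x+1"] by simp
    also have "\<dots> \<le> 2 / (real x + 1)" using Ef_bounds[OF c1, of k "x+1"] by (intro divide_right_mono) auto
    also have "\<dots> \<le> 2 / real x" using xpos by (intro divide_left_mono) auto
    finally show ?thesis .
  qed
  moreover have "0 \<le> R" "R \<le> 2 / real x"
  proof -
    show "0 \<le> R" unfolding R_def T_def by (rule tail(2)[OF c1])
    have "R \<le> 2 / (real x + 1)" unfolding R_def T_def by (rule tail(3)[OF c1])
    also have "\<dots> \<le> 2 / real x" using xpos by (intro divide_left_mono) auto
    finally show "R \<le> 2 / real x" .
  qed
  ultimately have "\<bar>ab * (A - B) - Ef c k (x+1) / (real x + 1) + R\<bar> \<le> 6 / real x" by linarith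
  also have "6 / real x \<le> 6 / real m" using xm mpos by (intro divide_left_mono) auto
  finally show ?thesis unfolding e[folded x_def] x_def[symmetric] .
qed

theorem lemma12:
  fixes c :: real and k :: nat
  assumes "c > 1" and "c \<notin> \<rat>"
  defines "d \<equiv> inverse (frac c)"
  shows "(\<lambda>m::nat.
      (\<Sum>n = 1..nat \<lfloor>real m * c\<rfloor>.
          ff c (int n) * gg c (\<lfloor>real n / c\<rfloor> + int k + 1) / real n)
    - (frac c / c + inverse (c * d) * (ln (real m) + ln c + euler_mascheroni)
       + frac (inverse d * (1 + real k))
       - (\<Sum>n. (inverse d * frac ((real (Suc n) + 1) / c)
                 + frac (inverse d * (of_int (cprime c (int (Suc n) + 1)) + real k + 1)))
               / (real (Suc n) * (real (Suc n) + 1)))))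
    \<in> O(\<lambda>m. 1 / real m)"
proof (rule bigoI[where c = 6])
  show "eventually (\<lambda>m::nat. norm ((\<Sum>n = 1..nat \<lfloor>real m * c\<rfloor>.
          ff c (int n) * gg c (\<lfloor>real n / c\<rfloor> + int k + 1) / real n)
    - (frac c / c + inverse (c * d) * (ln (real m) + ln c + euler_mascheroni)
       + frac (inverse d * (1 + real k))
       - (\<Sum>n. (inverse d * frac ((real (Suc n) + 1) / c)
                 + frac (inverse d * (of_int (cprime c (int (Suc n) + 1)) + real k + 1)))
               / (real (Suc n) * (real (Suc n) + 1))))) \<le> 6 * norm (1 / real m)) at_top"
    unfolding eventually_at_top_linorder
  proof (intro exI allI impI)
    fix m :: nat assume "m \<ge> 1"
    then show "norm ((\<Sum>n = 1..nat \<lfloor>real m * c\<rfloor>.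
          ff c (int n) * gg c (\<lfloor>real n / c\<rfloor> + int k + 1) / real n)
    - (frac c / c + inverse (c * d) * (ln (real m) + ln c + euler_mascheroni)
       + frac (inverse d * (1 + real k))
       - (\<Sum>n. (inverse d * frac ((real (Suc n) + 1) / c)
                 + frac (inverse d * (of_int (cprime c (int (Suc n) + 1)) + real k + 1)))
               / (real (Suc n) * (real (Suc n) + 1))))) \<le> 6 * norm (1 / real m)"
      using main_bound[OF assms(1) _ d_def[THEN meta_eq_to_obj_eq], of m k] by simp
  qed
qed

end
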